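(* Assume Schinzel's Hypothesis H. Then $\liminf_{n\to\infty} j(a_n)=1$; in particular there are infinitely many $n$ with $a_n-a_{n-1}\in A$.
   Context: Let $A$ be the set of positive integers $a$ such that $a^2+1$ is prime, enumerated in increasing order as $A=\{a_1<a_2<\cdots\}$. For $n\ge 2$, $j(a_n)$ denotes the smallest index $i$ with $1\le i\le n-1$ such that $a_n-a_{n-i}\in A$. A finite set of polynomials $f_1,\dots,f_r\in\mathbb{Z}[x]$ satisfies the Bunyakovsky condition if there is no prime $p$ such that $\prod_i f_i(a)\equiv 0 \pmod p$ for all $a\in\mathbb{F}_p$. Schinzel's Hypothesis H: if $f_1,\dots,f_r\in\mathbb{Z}[x]$ are irreducible polynomials with positive leading coefficients satisfying the Bunyakovsky condition, then there are infinitely many positive integers $x$ for which $f_1(x),\dots,f_r(x)$ are all prime. *)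

theory Defs
  imports "HOL-Computational_Algebra.Computational_Algebra" "HOL-Library.Extended_Nat" "HOL-Library.Liminf_Limsup"
begin

definition setA :: "nat set" where
  "setA = {a. a > 0 \<and> prime (a^2 + 1)}"

text \<open>Paper's a_n (1-indexed, n \<ge> 1): the n-th element of A in increasing order.\<close>
definition aseq :: "nat \<Rightarrow> nat" where
  "aseq n = enumerate setA (n - 1)"

definition jidx :: "nat \<Rightarrow> enat" where
  "jidx n = (if 2 \<le> n \<and> (\<exists>i. 1 \<le> i \<and> i \<le> n - 1 \<and> aseq n - aseq (n - i) \<in> setA)
             then enat (LEAST i. 1 \<le> i \<and> i \<le> n - 1 \<and> aseq n - aseq (n - i) \<in> setA)
             else \<infinity>)"

definition bunyakovsky :: "int poly set \<Rightarrow> bool" where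
  "bunyakovsky F \<longleftrightarrow> \<not> (\<exists>p::int. prime p \<and> (\<forall>a::int. p dvd (\<Prod>f\<in>F. poly f a)))"

definition schinzel_H :: bool where
  "schinzel_H \<longleftrightarrow> (\<forall>F :: int poly set. finite F \<and> (\<forall>f\<in>F. irreducible f \<and> lead_coeff f > 0)
     \<and> bunyakovsky F \<longrightarrow> infinite {x::nat. x > 0 \<and> (\<forall>f\<in>F. prime (poly f (int x)))})"

end

theory Submission
  imports Defs
begin

lemma irr2:
  fixes f :: "int poly"
  assumes deg: "degree f = 2" and lc: "lead_coeff f = 1" and nz: "\<And>x. poly f x \<noteq> 0"
  shows "irreducible f"
proof (rule irreducibleI)
  show "f \<noteq> 0" using deg by auto
  show "\<not> f dvd 1" using deg by (auto simp: is_unit_poly_iff)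
  fix a b assume fab: "f = a * b"
  have a0: "a \<noteq> 0" and b0: "b \<noteq> 0" using fab \<open>f \<noteq> 0\<close> by auto
  have dsum: "degree a + degree b = 2" using degree_mult_eq[OF a0 b0] fab deg by simp
  have "lead_coeff a * lead_coeff b = 1" using fab lc by (simp add: lead_coeff_mult)
  then have ua: "lead_coeff a dvd 1" and ub: "lead_coeff b dvd 1"
    by (metis dvd_triv_left, metis dvd_triv_right)
  have root: False if g1: "degree g = 1" "lead_coeff g dvd 1" "f = g * h" for g h :: "int poly"
  proof -
    obtain u c where g: "g = [:c, u:]" "u \<noteq> 0" using degree1_coeffs[OF g1(1)] by metis
    have "u dvd 1" using g1(2) g by simp
    then have "u = 1 \<or> u = -1" by auto
    then have "poly g (- c * u) = 0" using g by auto
    then show False using nz[of "- c * u"] g1(3) by simp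
  qed
  show "a dvd 1 \<or> b dvd 1"
  proof (cases "degree a")
    case 0
    then show ?thesis using ua by (metis degree_0_id is_unit_poly_iff)
  next
    case (Suc k)
    show ?thesis
    proof (cases k)
      case 0 then show ?thesis using root[of a b] Suc ua fab by simp
    next
      case (Suc m)
      then have "degree b = 0" using dsum \<open>degree a = Suc k\<close> by simp
      then show ?thesis using ub by (metis degree_0_id is_unit_poly_iff)
    qed
  qed
qed


lemma ne: "[:1,0,1:] \<noteq> ([:5,4,1:] :: int poly)" by simp
lemma prodF: "(\<Prod>f\<in>{[:1,0,1:], [:5,4,1:]}. poly f (a::int)) = (a^2+1)*(a^2+4*a+5)"
  using ne by (simp add: algebra_simps power2_eq_square)

lemma bunya: "bunyakovsky {[:1,0,1:], [:5,4,1:]}"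
proof -
  have "\<not> (\<forall>a::int. p dvd (\<Prod>f\<in>{[:1,0,1:], [:5,4,1:]}. poly f a))" if p: "prime p" for p :: int
  proof
    assume H: "\<forall>a::int. p dvd (\<Prod>f\<in>{[:1,0,1:], [:5,4,1:]}. poly f a)"
    have "p dvd 5" using H[rule_format, of 0] unfolding prodF by simp
    then have "p = 5" using p
      using primes_dvd_imp_eq[of p 5] by simp
    moreover have "p dvd 629" using H[rule_format, of 4] unfolding prodF by simp
    ultimately show False by simp
  qed
  then show ?thesis unfolding bunyakovsky_def by (simp only: not_ex de_Morgan_conj) (meson)
qed

lemma two_in: "2 \<in> setA" by (simp add: setA_def)

lemma odd_notin: assumes "odd (y::nat)" "y > 1" shows "y \<notin> setA"
proof
  assume "y \<in> setA"
  then have pr: "prime (y^2+1)" by (simp add: setA_def)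
  have "even (y^2+1)" using assms by simp
  moreover have "y^2+1 > 2"
  proof -
    have "2 \<le> y" using assms by simp
    then have "2*2 \<le> y*y" using mult_le_mono by blast
    then show ?thesis by (simp add: power2_eq_square)
  qed
  moreover have "odd (y^2+1)" using prime_odd_nat[OF pr] \<open>y^2+1 > 2\<close> by simp
  ultimately show False by simp
qed

lemma jidx_ge: "1 \<le> jidx n"
proof (cases "2 \<le> n \<and> (\<exists>i. 1 \<le> i \<and> i \<le> n - 1 \<and> aseq n - aseq (n - i) \<in> setA)")
  case True
  then have "1 \<le> (LEAST i. 1 \<le> i \<and> i \<le> n - 1 \<and> aseq n - aseq (n - i) \<in> setA)"
    by (metis (mono_tags, lifting) LeastI_ex)
  moreover have "jidx n = enat (LEAST i. 1 \<le> i \<and> i \<le> n - 1 \<and> aseq n - aseq (n - i) \<in> setA)"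
    unfolding jidx_def by (rule if_P[OF True])
  ultimately show ?thesis by (simp add: one_enat_def)
next
  case False
  have "jidx n = \<infinity>" unfolding jidx_def by (rule if_not_P[OF False])
  then show ?thesis by simp
qed

lemma jidx_one: assumes "2 \<le> n" "aseq n - aseq (n - 1) \<in> setA" shows "jidx n = 1"
proof -
  have ex: "\<exists>i. 1 \<le> i \<and> i \<le> n - 1 \<and> aseq n - aseq (n - i) \<in> setA"
    using assms by (intro exI[of _ 1]) auto
  have "(LEAST i. 1 \<le> i \<and> i \<le> n - 1 \<and> aseq n - aseq (n - i) \<in> setA) = 1"
    using assms by (intro Least_equality) auto
  then show ?thesis using ex assms unfolding jidx_def by (simp add: one_enat_def)
qed

lemma irrA: "irreducible ([:1,0,1:] :: int poly)"
proof (rule irr2)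
  fix x :: int
  have "0 \<le> x * x" by simp
  moreover have "poly [:1,0,1:] x = 1 + x * x" by simp
  ultimately show "poly [:1,0,1:] x \<noteq> 0" by linarith
qed simp_all

lemma irrB: "irreducible ([:5,4,1:] :: int poly)"
proof (rule irr2)
  fix x :: int
  have "0 \<le> (x+2) * (x+2)" by simp
  then show "poly [:5,4,1:] x \<noteq> 0" by (simp add: algebra_simps)
qed simp_all

theorem proposition3:
  assumes "schinzel_H"
  shows "Liminf sequentially jidx = 1 \<and> infinite {n. 2 \<le> n \<and> aseq n - aseq (n - 1) \<in> setA}"
proof -
  define F where "F = {[:1,0,1:], [:5,4,1:] :: int poly}"
  have irrF: "\<forall>f\<in>F. irreducible f \<and> lead_coeff f > 0"
    unfolding F_def using irrA irrB by simp
  have inf0: "infinite {x::nat. x > 0 \<and> (\<forall>f\<in>F. prime (poly f (int x)))}"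
  proof -
    have imp: "finite F \<and> (\<forall>f\<in>F. irreducible f \<and> lead_coeff f > 0) \<and> bunyakovsky F
       \<longrightarrow> infinite {x::nat. x > 0 \<and> (\<forall>f\<in>F. prime (poly f (int x)))}"
      using assms unfolding schinzel_H_def by blast
    have "finite F" unfolding F_def by simp
    moreover have "bunyakovsky F" unfolding F_def by (rule bunya)
    ultimately show ?thesis using imp irrF by blast
  qed
  define X where "X = {x::nat. x > 1 \<and> prime (x^2+1) \<and> prime (x^2+4*x+5)}"
  have sub: "{x::nat. x > 0 \<and> (\<forall>f\<in>F. prime (poly f (int x)))} - {1} \<subseteq> X"
  proof
    fix x assume x: "x \<in> {x::nat. x > 0 \<and> (\<forall>f\<in>F. prime (poly f (int x)))} - {1}"
    have e1: "poly [:1,0,1:] (int x) = int (x^2+1)" by (simp add: power2_eq_square algebra_simps)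
    have e2: "poly [:5,4,1:] (int x) = int (x^2+4*x+5)" by (simp add: power2_eq_square algebra_simps)
    have "prime (poly [:1,0,1:] (int x))" "prime (poly [:5,4,1:] (int x))" using x unfolding F_def by auto
    then have "prime (x^2+1)" "prime (x^2+4*x+5)" unfolding e1 e2 prime_nat_int_transfer .
    then show "x \<in> X" using x unfolding X_def by auto
  qed
  have infX: "infinite X"
  proof
    assume "finite X"
    then have "finite ({x::nat. x > 0 \<and> (\<forall>f\<in>F. prime (poly f (int x)))} - {1})"
      by (rule finite_subset[OF sub])
    then show False using inf0 by simp
  qed
  have key: "x \<in> setA \<and> x+2 \<in> setA \<and> x+1 \<notin> setA" if x: "x \<in> X" for x
  proof -
    have x1: "x > 1" "prime (x^2+1)" "prime (x^2+4*x+5)" using x unfolding X_def by auto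
    have xa: "x \<in> setA" using x1 unfolding setA_def by auto
    have ev: "even x" using odd_notin[OF _ x1(1)] xa by blast
    have e3: "(x+2)^2+1 = x^2+4*x+5" by (simp add: power2_eq_square algebra_simps)
    have "prime ((x+2)^2+1)" unfolding e3 by (rule x1(3))
    then have "x+2 \<in> setA" unfolding setA_def by simp
    moreover have "x+1 \<notin> setA" using odd_notin[of "x+1"] ev x1(1) by simp
    ultimately show ?thesis using xa by simp
  qed
  have XA: "X \<subseteq> setA" using key by blast
  have infA: "infinite setA"
  proof
    assume "finite setA"
    then have "finite X" by (rule finite_subset[OF XA])
    then show False using infX by simp
  qed
  define N where "N = {n. 2 \<le> n \<and> aseq n - aseq (n - 1) \<in> setA}"
  have XN: "X \<subseteq> (\<lambda>n. aseq (n - 1)) ` N"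
  proof
    fix x assume x: "x \<in> X"
    note kx = key[OF x]
    obtain k where k: "enumerate setA k = x" using enumerate_Ex[OF infA] kx by blast
    have "enumerate setA (Suc k) = (LEAST s. s \<in> setA \<and> enumerate setA k < s)"
      using enumerate_Suc''[OF infA] .
    also have "\<dots> = x + 2"
    proof (rule Least_equality)
      show "x + 2 \<in> setA \<and> enumerate setA k < x + 2" using kx k by simp
      fix y assume "y \<in> setA \<and> enumerate setA k < y"
      then show "x + 2 \<le> y" using kx k by (cases "y = x + 1") auto
    qed
    finally have s: "enumerate setA (Suc k) = x + 2" .
    have a1: "aseq (Suc (Suc k)) = x + 2" using s unfolding aseq_def by simp
    have a2: "aseq (Suc (Suc k) - 1) = x" using k unfolding aseq_def by simp
    have "Suc (Suc k) \<in> N" unfolding N_def using a1 a2 two_in by simp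
    then show "x \<in> (\<lambda>n. aseq (n - 1)) ` N" by (rule image_eqI[where f="\<lambda>n. aseq (n - 1)", OF a2[symmetric]])
  qed
  have infN: "infinite N"
  proof
    assume "finite N"
    then have "finite X" by (rule finite_surj[OF _ XN])
    then show False using infX by simp
  qed
  have lim: "Liminf sequentially jidx = 1"
  proof (rule order.antisym)
    show "1 \<le> Liminf sequentially jidx"
      by (rule Liminf_bounded) (simp add: jidx_ge)
    show "Liminf sequentially jidx \<le> 1"
    proof (rule Liminf_least)
      fix P assume "eventually P sequentially"
      then obtain n0 where n0: "\<And>n. n \<ge> n0 \<Longrightarrow> P n" by (auto simp: eventually_sequentially)
      obtain n where n: "n \<in> N" "n \<ge> n0" using infN unfolding infinite_nat_iff_unbounded_le by blast
      have "jidx n = 1" using n unfolding N_def by (simp add: jidx_one)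
      moreover have "n \<in> Collect P" using n0 n by simp
      ultimately show "(INF x\<in>Collect P. jidx x) \<le> 1" using INF_lower[of n "Collect P" jidx] by simp
    qed
  qed
  show ?thesis using lim infN unfolding N_def by (rule conjI)
qed
end
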